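(* Let $n\ge1$, $T\ge1$, $\theta\in(0,1]$, and let $C_1,\dots,C_T\in\mathbb{R}^{1\times n}$ be i.i.d. random row vectors such that $C_t=0$ with probability $1-\theta$ and, with probability $\theta$, $C_t$ is uniformly distributed on $\{e_1^\top,\dots,e_n^\top\}$ (the canonical basis vectors of $\mathbb{R}^n$). Let $O_T^\top O_T=\sum_{t=1}^T C_t^\top C_t$. Then for any $\delta\in(0,1)$, if $T\ge\frac{8n}{\theta}\log(\frac n\delta)$, with probability at least $1-2\delta$, $$\frac{\theta T}{2n}I_n\preceq O_T^\top O_T\preceq\frac{2e\theta T}{n}I_n.$$
   Context: $\preceq$ is the Löwner (positive semidefinite) order. *)

theory Defs
  imports "HOL-Probability.Probability"
begin

definition lowner_le :: "real^'n^'n \<Rightarrow> real^'n^'n \<Rightarrow> bool" where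
  "lowner_le A B \<longleftrightarrow> (\<forall>x::real^'n. 0 \<le> x \<bullet> ((B - A) *v x))"

text \<open>For a row vector c (stored as an element of real^'n), the matrix c^T c.\<close>
definition outer_sq :: "real^'n \<Rightarrow> real^'n^'n" where
  "outer_sq c = (\<chi> i j. c $ i * c $ j)"

definition row_law :: "real \<Rightarrow> (real^'n) pmf" where
  "row_law \<theta> = bind_pmf (bernoulli_pmf \<theta>)
     (\<lambda>b. if b then pmf_of_set (range (\<lambda>i::'n. axis i (1::real))) else return_pmf 0)"

end

theory Submission
  imports Defs
begin

lemma card_axes: "card (range (\<lambda>i::'n::finite. axis i (1::real))) = CARD('n)"
  by (simp add: card_image inj_on_def axis_eq_axis)

lemma set_row_law:
  assumes "0 \<le> \<theta>" "\<theta> \<le> 1"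
  shows "set_pmf (row_law \<theta> :: (real^'n) pmf) \<subseteq> insert 0 (range (\<lambda>i::'n::finite. axis i 1))"
  unfolding row_law_def using assms
  by (auto simp: set_bind_pmf split: if_splits)

lemma pmf_row_law:
  assumes "0 \<le> \<theta>" "\<theta> \<le> 1"
  shows "pmf (row_law \<theta>) (axis (k::'n::finite) (1::real)) = \<theta> / CARD('n)"
proof -
  have ne: "axis k (1::real) \<noteq> 0" by (simp add: axis_eq_0_iff)
  show ?thesis unfolding row_law_def pmf_bind using assms ne
    by (simp add: card_axes)
qed

lemma diag_lowner:
  assumes "\<And>i. a i \<le> b i"
  shows "lowner_le ((\<chi> i j. if i = j then a i else 0) :: real^'n::finite^'n) (\<chi> i j. if i = j then b i else 0)"
  unfolding lowner_le_def
proof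
  fix x :: "real^'n"
  have "x \<bullet> (((\<chi> i j. if i = j then b i else 0) - (\<chi> i j. if i = j then a i else 0)) *v x)
      = (\<Sum>i\<in>UNIV. (b i - a i) * (x $ i)^2)"
  proof -
    have "(((\<chi> i j. if i = j then b i else 0) - (\<chi> i j. if i = j then a i else 0)) *v x) $ i = (b i - a i) * x $ i" for i
      by (simp add: matrix_vector_mult_def if_distrib[of "\<lambda>u. u * _"] left_diff_distrib sum_subtractf cong: if_cong)
    note comp = this
    show ?thesis unfolding inner_vec_def comp
      by (simp add: power2_eq_square mult_ac)
  qed
  also have "\<dots> \<ge> 0" using assms by (intro sum_nonneg) auto
  finally show "0 \<le> x \<bullet> (((\<chi> i j. if i = j then b i else 0) - (\<chi> i j. if i = j then a i else 0)) *v x)" .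
qed

lemma scaled_id_diag: "(c *\<^sub>R mat 1 :: real^'n::finite^'n) = (\<chi> i j. if i = j then c else 0)"
  by (simp add: vec_eq_iff mat_def)

lemma sum_outer_sq_diag:
  assumes "\<And>t. t \<in> I \<Longrightarrow> c t \<in> insert 0 (range (\<lambda>i::'n::finite. axis i (1::real)))"
  shows "(\<Sum>t\<in>I. outer_sq (c t)) = (\<chi> i j. if i = j then (\<Sum>t\<in>I. if c t = axis i 1 then 1 else 0) else 0)"
proof -
  have *: "outer_sq (c t) $ i $ j = (if i = j then (if c t = axis i 1 then 1 else 0) else 0)" if "t \<in> I" for t i j
    using assms[OF that] by (auto simp: outer_sq_def axis_def axis_eq_axis)
  show ?thesis by (auto simp: vec_eq_iff sum_component * intro!: sum.cong)
qed


lemma (in prob_space) mgf_bound: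
  fixes C :: "'i \<Rightarrow> 'a \<Rightarrow> real^'n::finite"
  assumes fin: "finite I" and ind: "indep_vars (\<lambda>_. borel) C I"
    and p01: "0 \<le> p" "p \<le> 1"
    and pr: "\<And>t. t \<in> I \<Longrightarrow> prob {\<omega> \<in> space M. C t \<omega> = a} = p"
  shows "expectation (\<lambda>\<omega>. exp (s * (\<Sum>t\<in>I. if C t \<omega> = a then 1 else 0)))
           \<le> exp (real (card I) * p * (exp s - 1))"
proof -
  define Y where "Y t \<omega> = exp (s * (if C t \<omega> = a then 1 else 0))" for t \<omega>
  have meas: "(\<lambda>c. exp (s * (if c = a then 1 else 0))) \<in> borel_measurable (borel :: (real^'n) measure)"
    by measurable
  have rv: "C t \<in> borel_measurable M" if "t \<in> I" for t
    using ind that unfolding indep_vars_def by auto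
  have indY: "indep_vars (\<lambda>_. borel) Y I"
    unfolding Y_def by (rule indep_vars_compose2[OF ind]) (rule meas)
  have measY: "Y t \<in> borel_measurable M" if "t \<in> I" for t
    unfolding Y_def using rv[OF that] meas by (simp add: measurable_compose[OF _ meas])
  have intY: "integrable M (Y t)" if "t \<in> I" for t
  proof (rule integrable_const_bound[where B = "exp \<bar>s\<bar>"])
    show "AE x in M. norm (Y t x) \<le> exp \<bar>s\<bar>" by (auto simp: Y_def)
  qed (use measY[OF that] in simp)
  have sets: "{\<omega> \<in> space M. C t \<omega> = a} \<in> sets M" if "t \<in> I" for t
    using rv[OF that] by measurable
  have EY: "expectation (Y t) = 1 + (exp s - 1) * p" if "t \<in> I" for t
  proof -
    have "expectation (Y t) = expectation (\<lambda>\<omega>. 1 + (exp s - 1) * indicator {\<omega> \<in> space M. C t \<omega> = a} \<omega>)"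
      by (intro Bochner_Integration.integral_cong) (auto simp: Y_def indicator_def)
    also have "\<dots> = 1 + (exp s - 1) * prob {\<omega> \<in> space M. C t \<omega> = a}"
      using sets[OF that]
      by (subst Bochner_Integration.integral_add) (auto simp: prob_space emeasure_eq_measure intro!: integrable_real_indicator)
    finally show ?thesis using pr[OF that] by simp
  qed
  have "expectation (\<lambda>\<omega>. exp (s * (\<Sum>t\<in>I. if C t \<omega> = a then 1 else 0))) = expectation (\<lambda>\<omega>. \<Prod>t\<in>I. Y t \<omega>)"
    by (simp add: Y_def exp_sum sum_distrib_left fin)
  also have "\<dots> = (\<Prod>t\<in>I. expectation (Y t))"
    by (rule indep_vars_lebesgue_integral[OF fin indY intY])
  also have "\<dots> = (1 + (exp s - 1) * p) ^ card I"
    using EY by simp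
  also have "\<dots> \<le> exp ((exp s - 1) * p) ^ card I"
  proof (rule power_mono)
    show "0 \<le> 1 + (exp s - 1) * p"
    proof -
      have "(exp s - 1) * p \<ge> -1 * p" using p01 by (intro mult_right_mono) (auto simp: add_increasing)
      then show ?thesis using p01 by linarith
    qed
  qed simp
  also have "\<dots> = exp (real (card I) * p * (exp s - 1))"
    by (simp add: exp_of_nat_mult[symmetric] mult_ac)
  finally show ?thesis .
qed

lemma (in prob_space) markov_exp:
  fixes C :: "'i \<Rightarrow> 'a \<Rightarrow> real^'n::finite"
  assumes fin: "finite I" and ind: "indep_vars (\<lambda>_. borel) C I"
    and p01: "0 \<le> p" "p \<le> 1"
    and pr: "\<And>t. t \<in> I \<Longrightarrow> prob {\<omega> \<in> space M. C t \<omega> = a} = p"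
  shows "prob {\<omega> \<in> space M. exp c \<le> exp (s * (\<Sum>t\<in>I. if C t \<omega> = a then 1 else 0))}
           \<le> exp (real (card I) * p * (exp s - 1) - c)"
proof -
  have rv: "C t \<in> borel_measurable M" if "t \<in> I" for t
    using ind that unfolding indep_vars_def by auto
  define f where "f \<omega> = exp (s * (\<Sum>t\<in>I. if C t \<omega> = a then 1 else (0::real)))" for \<omega>
  have mf: "f \<in> borel_measurable M"
    unfolding f_def using rv by measurable
  have bnd: "\<bar>\<Sum>t\<in>I. if C t \<omega> = a then 1 else (0::real)\<bar> \<le> real (card I)" for \<omega>
  proof -
    have "\<bar>\<Sum>t\<in>I. if C t \<omega> = a then 1 else (0::real)\<bar> \<le> (\<Sum>t\<in>I. \<bar>if C t \<omega> = a then 1 else (0::real)\<bar>)"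
      by (rule sum_abs)
    also have "\<dots> \<le> (\<Sum>t\<in>I. 1)" by (intro sum_mono) auto
    finally show ?thesis by simp
  qed
  have intf: "integrable M f"
  proof (rule integrable_const_bound[where B = "exp (\<bar>s\<bar> * real (card I))"])
    show "AE x in M. norm (f x) \<le> exp (\<bar>s\<bar> * real (card I))"
    proof (rule AE_I2)
      fix x
      have "s * (\<Sum>t\<in>I. if C t x = a then 1 else (0::real)) \<le> \<bar>s\<bar> * \<bar>\<Sum>t\<in>I. if C t x = a then 1 else (0::real)\<bar>"
        by (metis abs_ge_self abs_mult)
      also have "\<dots> \<le> \<bar>s\<bar> * real (card I)" by (intro mult_left_mono bnd) auto
      finally show "norm (f x) \<le> exp (\<bar>s\<bar> * real (card I))" by (simp add: f_def)
    qed
  qed (use mf in simp)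
  have "prob {\<omega> \<in> space M. exp c \<le> f \<omega>} \<le> expectation f / exp c"
    by (rule integral_Markov_inequality_measure[OF intf]) (use mf in \<open>auto simp: f_def\<close>)
  also have "\<dots> \<le> exp (real (card I) * p * (exp s - 1)) / exp c"
    unfolding f_def by (intro divide_right_mono mgf_bound[OF fin ind p01 pr]) auto
  also have "\<dots> = exp (real (card I) * p * (exp s - 1) - c)"
    by (simp add: exp_diff)
  finally show ?thesis unfolding f_def .
qed

lemma exp_half_ge: "8/5 \<le> exp (1/2::real)"
proof -
  have "9/8 \<le> exp (1/8::real)" using exp_ge_add_one_self[of "1/8::real"] by simp
  then have "(9/8)^4 \<le> exp (1/8::real) ^ 4" by (intro power_mono) auto
  also have "\<dots> = exp (1/2)" by (simp add: exp_of_nat_mult[symmetric])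
  moreover have "(8/5::real) \<le> (9/8)^4" by (simp add: eval_nat_numeral)
  ultimately show ?thesis by linarith
qed

lemma aux1: "0 \<le> m \<Longrightarrow> 0 \<le> (e::real) \<Longrightarrow> m*(e-1) - 2*e*m \<le> -m/8"
proof -
  assume "0 \<le> m" "0 \<le> e"
  then have "0 \<le> m*e" by simp
  then show ?thesis using \<open>0 \<le> m\<close> by (simp add: algebra_simps)
qed

lemma aux2: "0 \<le> m \<Longrightarrow> x \<le> 5/8 \<Longrightarrow> m*(x-1) - (- m/4) \<le> -(m::real)/8"
proof -
  assume "0 \<le> m" "x \<le> 5/8"
  then have "m*x \<le> m*(5/8)" by (intro mult_left_mono)
  then show ?thesis using \<open>0 \<le> m\<close> by (simp add: algebra_simps)
qed

lemma (in prob_space) chernoff_upper: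
  fixes C :: "'i \<Rightarrow> 'a \<Rightarrow> real^'n::finite"
  assumes fin: "finite I" and ind: "indep_vars (\<lambda>_. borel) C I"
    and p01: "0 \<le> p" "p \<le> 1"
    and pr: "\<And>t. t \<in> I \<Longrightarrow> prob {\<omega> \<in> space M. C t \<omega> = a} = p"
  shows "prob {\<omega> \<in> space M. 2 * exp 1 * (real (card I) * p) \<le> (\<Sum>t\<in>I. if C t \<omega> = a then 1 else 0)}
           \<le> exp (- (real (card I) * p) / 8)"
proof -
  let ?\<mu> = "real (card I) * p"
  have "prob {\<omega> \<in> space M. 2 * exp 1 * ?\<mu> \<le> (\<Sum>t\<in>I. if C t \<omega> = a then 1 else 0)}
     = prob {\<omega> \<in> space M. exp (2 * exp 1 * ?\<mu>) \<le> exp (1 * (\<Sum>t\<in>I. if C t \<omega> = a then 1 else 0))}"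
    by simp
  also have "\<dots> \<le> exp (?\<mu> * (exp 1 - 1) - 2 * exp 1 * ?\<mu>)"
    by (rule markov_exp[OF fin ind p01 pr])
  also have "\<dots> \<le> exp (- ?\<mu> / 8)"
  proof -
    have "0 \<le> ?\<mu>" using p01 by simp
    then have "?\<mu> * (exp 1 - 1) - 2 * exp 1 * ?\<mu> \<le> - ?\<mu> / 8"
      by (rule aux1) simp
    then show ?thesis by simp
  qed
  finally show ?thesis .
qed

lemma (in prob_space) chernoff_lower:
  fixes C :: "'i \<Rightarrow> 'a \<Rightarrow> real^'n::finite"
  assumes fin: "finite I" and ind: "indep_vars (\<lambda>_. borel) C I"
    and p01: "0 \<le> p" "p \<le> 1"
    and pr: "\<And>t. t \<in> I \<Longrightarrow> prob {\<omega> \<in> space M. C t \<omega> = a} = p"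
  shows "prob {\<omega> \<in> space M. (\<Sum>t\<in>I. if C t \<omega> = a then 1 else 0) \<le> (real (card I) * p) / 2}
           \<le> exp (- (real (card I) * p) / 8)"
proof -
  let ?\<mu> = "real (card I) * p"
  have "prob {\<omega> \<in> space M. (\<Sum>t\<in>I. if C t \<omega> = a then 1 else 0) \<le> ?\<mu> / 2}
     = prob {\<omega> \<in> space M. exp (- ?\<mu> / 4) \<le> exp ((-1/2) * (\<Sum>t\<in>I. if C t \<omega> = a then 1 else 0))}"
    by (intro arg_cong[where f = prob]) auto
  also have "\<dots> \<le> exp (?\<mu> * (exp (-1/2) - 1) - (- ?\<mu> / 4))"
    by (rule markov_exp[OF fin ind p01 pr])
  also have "\<dots> \<le> exp (- ?\<mu> / 8)"
  proof -
    have "0 \<le> ?\<mu>" using p01 by simp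
    moreover have "exp (-1/2::real) \<le> 5/8"
    proof -
      have "exp (-1/2::real) = 1 / exp (1/2)" by (simp add: exp_minus field_simps)
      also have "\<dots> \<le> 1 / (8/5)" by (intro divide_left_mono exp_half_ge) auto
      finally show ?thesis by simp
    qed
    ultimately have "?\<mu> * (exp (-1/2) - 1) - (- ?\<mu> / 4) \<le> - ?\<mu> / 8"
      by (rule aux2)
    then show ?thesis by simp
  qed
  finally show ?thesis .
qed


lemma cont_quad: "continuous_on UNIV (\<lambda>A::real^'n::finite^'n. x \<bullet> ((A - B) *v x))"
  unfolding inner_vec_def matrix_vector_mult_def
  by (intro continuous_intros)

lemma cont_quad2: "continuous_on UNIV (\<lambda>A::real^'n::finite^'n. x \<bullet> ((B - A) *v x))"
  unfolding inner_vec_def matrix_vector_mult_def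
  by (intro continuous_intros)

lemma closed_lowner1: "closed {A::real^'n::finite^'n. lowner_le B A}"
proof -
  have "{A::real^'n^'n. lowner_le B A} = (\<Inter>x. {A. 0 \<le> x \<bullet> ((A - B) *v x)})"
    by (auto simp: lowner_le_def)
  also have "closed \<dots>"
    by (intro closed_INT ballI closed_Collect_le continuous_on_const cont_quad)
  finally show ?thesis .
qed

lemma closed_lowner2: "closed {A::real^'n::finite^'n. lowner_le A B}"
proof -
  have "{A::real^'n^'n. lowner_le A B} = (\<Inter>x. {A. 0 \<le> x \<bullet> ((B - A) *v x)})"
    by (auto simp: lowner_le_def)
  also have "closed \<dots>"
    by (intro closed_INT ballI closed_Collect_le continuous_on_const cont_quad2)
  finally show ?thesis .
qed

lemma cont_outer_sq: "continuous_on UNIV (outer_sq :: real^'n::finite \<Rightarrow> _)"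
  unfolding outer_sq_def[abs_def] by (intro continuous_intros)

lemma meas_outer_sq[measurable]: "(outer_sq :: real^'n::finite \<Rightarrow> _) \<in> borel_measurable borel"
  using cont_outer_sq by (rule borel_measurable_continuous_onI)


theorem proposition2:
  fixes M :: "'a measure" and C :: "nat \<Rightarrow> 'a \<Rightarrow> real^'n"
    and T :: nat and \<theta> \<delta> :: real
  assumes "prob_space M"
    and "T \<ge> 1" and "0 < \<theta>" and "\<theta> \<le> 1"
    and "\<And>t. t \<in> {1..T} \<Longrightarrow> C t \<in> borel_measurable M"
    and "prob_space.indep_vars M (\<lambda>_. borel) C {1..T}"
    and "\<And>t A. t \<in> {1..T} \<Longrightarrow> A \<in> sets borel \<Longrightarrow>
           measure M {\<omega> \<in> space M. C t \<omega> \<in> A} = measure_pmf.prob (row_law \<theta>) A"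
    and "0 < \<delta>" and "\<delta> < 1"
    and "real T \<ge> 8 * real CARD('n) / \<theta> * ln (real CARD('n) / \<delta>)"
  shows "measure M {\<omega> \<in> space M.
            lowner_le ((\<theta> * real T / (2 * real CARD('n))) *\<^sub>R mat 1)
                      (\<Sum>t\<in>{1..T}. outer_sq (C t \<omega>)) \<and>
            lowner_le (\<Sum>t\<in>{1..T}. outer_sq (C t \<omega>))
                      ((2 * exp 1 * \<theta> * real T / real CARD('n)) *\<^sub>R mat 1)}
         \<ge> 1 - 2 * \<delta>"
proof -
  interpret P: prob_space M by fact
  note rv = assms(5) and ind = assms(6) and law = assms(7)
  define n where "n = real CARD('n)"
  define I where "I = {1..T}"
  define p where "p = \<theta> / n"
  define \<mu> where "\<mu> = real (card I) * p"
  have n_pos: "0 < n" unfolding n_def by simp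
  have cardI: "card I = T" unfolding I_def by simp
  have finI: "finite I" unfolding I_def by simp
  have p01: "0 \<le> p" "p \<le> 1"
  proof -
    show "0 \<le> p" unfolding p_def using assms(3) n_pos by simp
    have "1 \<le> n" unfolding n_def by (simp add: Suc_le_eq)
    then have "\<theta> / n \<le> \<theta>" using assms(3) by (simp add: divide_le_eq mult_le_cancel_left1)
    then show "p \<le> 1" unfolding p_def using assms(4) by simp
  qed
  define L where "L = ((\<theta> * real T / (2 * real CARD('n))) *\<^sub>R mat 1 :: real^'n^'n)"
  define U where "U = ((2 * exp 1 * \<theta> * real T / real CARD('n)) *\<^sub>R mat 1 :: real^'n^'n)"
  define Sg where "Sg \<omega> = (\<Sum>t\<in>{1..T}. outer_sq (C t \<omega>))" for \<omega>
  define E where "E = {\<omega> \<in> space M. lowner_le L (Sg \<omega>) \<and> lowner_le (Sg \<omega>) U}"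
  define S0 where "S0 = insert 0 (range (\<lambda>i::'n. axis i (1::real)))"
  define N where "N i \<omega> = (\<Sum>t\<in>I. if C t \<omega> = axis i 1 then 1 else (0::real))" for i \<omega>
  define Bad where "Bad t = {\<omega> \<in> space M. C t \<omega> \<notin> S0}" for t
  define Lo where "Lo i = {\<omega> \<in> space M. N i \<omega> \<le> \<mu> / 2}" for i
  define Hi where "Hi i = {\<omega> \<in> space M. 2 * exp 1 * \<mu> \<le> N i \<omega>}" for i

  have Sg_meas: "Sg \<in> borel_measurable M"
    unfolding Sg_def using rv by (intro borel_measurable_sum) measurable
  have E_sets: "E \<in> sets M"
  proof -
    have "E = Sg -` ({A. lowner_le L A} \<inter> {A. lowner_le A U}) \<inter> space M"
      unfolding E_def by auto
    also have "\<dots> \<in> sets M"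
      by (intro measurable_sets[OF Sg_meas] borel_closed closed_Int closed_lowner1 closed_lowner2)
    finally show ?thesis .
  qed
  have S0_fin: "finite S0" unfolding S0_def by simp
  have Bad_sets: "Bad t \<in> sets M" if "t \<in> I" for t
  proof -
    have "Bad t = C t -` (- S0) \<inter> space M" unfolding Bad_def by auto
    also have "\<dots> \<in> sets M"
      using rv that unfolding I_def
      by (intro measurable_sets[OF rv] borel_open open_Compl finite_imp_closed S0_fin) auto
    finally show ?thesis .
  qed
  have Bad_0: "P.prob (Bad t) = 0" if "t \<in> I" for t
  proof -
    have "Bad t = {\<omega> \<in> space M. C t \<omega> \<in> - S0}" unfolding Bad_def by auto
    moreover have "P.prob {\<omega> \<in> space M. C t \<omega> \<in> - S0} = measure_pmf.prob (row_law \<theta>) (- S0)"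
      using that unfolding I_def
      by (intro law borel_open open_Compl finite_imp_closed S0_fin) auto
    ultimately have "P.prob (Bad t) = measure_pmf.prob (row_law \<theta>) (- S0)" by simp
    also have "\<dots> = 0"
      unfolding measure_pmf_zero_iff using set_row_law[of \<theta>, where 'n='n] assms(3,4)
      unfolding S0_def by auto
    finally show ?thesis .
  qed
  have pr: "P.prob {\<omega> \<in> space M. C t \<omega> = axis i 1} = p" if "t \<in> I" for t i
  proof -
    have "P.prob {\<omega> \<in> space M. C t \<omega> = axis i 1} = P.prob {\<omega> \<in> space M. C t \<omega> \<in> {axis i 1}}"
      by simp
    also have "\<dots> = measure_pmf.prob (row_law \<theta>) {axis i 1}"
      using that unfolding I_def by (intro law) auto
    also have "\<dots> = p" unfolding measure_pmf_single p_def n_def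
      using assms(3,4) by (simp add: pmf_row_law)
    finally show ?thesis .
  qed
  have indI: "P.indep_vars (\<lambda>_. borel) C I" unfolding I_def by (rule ind)
  have mu_bound: "exp (- \<mu> / 8) \<le> \<delta> / n"
  proof -
    have "8 * n / \<theta> * ln (n / \<delta>) * (\<theta> / n) \<le> real T * (\<theta> / n)"
      using assms(10) assms(3) n_pos unfolding n_def[symmetric]
      by (intro mult_right_mono) auto
    then have "8 * ln (n / \<delta>) \<le> \<mu>"
      unfolding \<mu>_def cardI p_def using assms(3) n_pos by (simp add: field_simps)
    then have "- \<mu> / 8 \<le> ln (\<delta> / n)"
      using n_pos assms(8) by (simp add: ln_div)
    then have "exp (- \<mu> / 8) \<le> exp (ln (\<delta> / n))" by simp
    also have "\<dots> = \<delta> / n" using n_pos assms(8) by simp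
    finally show ?thesis .
  qed
  have Lo_le: "P.prob (Lo i) \<le> \<delta> / n" for i
  proof -
    have "P.prob (Lo i) \<le> exp (- (real (card I) * p) / 8)"
      unfolding Lo_def N_def \<mu>_def
      by (rule P.chernoff_lower[OF finI indI p01]) (rule pr)
    then show ?thesis using mu_bound unfolding \<mu>_def by simp
  qed
  have Hi_le: "P.prob (Hi i) \<le> \<delta> / n" for i
  proof -
    have "P.prob (Hi i) \<le> exp (- (real (card I) * p) / 8)"
      unfolding Hi_def N_def \<mu>_def
      by (rule P.chernoff_upper[OF finI indI p01]) (rule pr)
    then show ?thesis using mu_bound unfolding \<mu>_def by simp
  qed
  have N_meas: "N i \<in> borel_measurable M" for i
    unfolding N_def using rv unfolding I_def by measurable
  have Lo_sets: "Lo i \<in> sets M" for i unfolding Lo_def using N_meas by measurable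
  have Hi_sets: "Hi i \<in> sets M" for i unfolding Hi_def using N_meas by measurable

  have sub: "space M - E \<subseteq> (\<Union>t\<in>I. Bad t) \<union> ((\<Union>i. Lo i) \<union> (\<Union>i. Hi i))"
  proof
    fix \<omega> assume \<omega>: "\<omega> \<in> space M - E"
    show "\<omega> \<in> (\<Union>t\<in>I. Bad t) \<union> ((\<Union>i. Lo i) \<union> (\<Union>i. Hi i))"
    proof (rule ccontr)
      assume "\<omega> \<notin> (\<Union>t\<in>I. Bad t) \<union> ((\<Union>i. Lo i) \<union> (\<Union>i. Hi i))"
      then have good: "\<And>t. t \<in> I \<Longrightarrow> C t \<omega> \<in> S0" and lo: "\<And>i. \<mu> / 2 < N i \<omega>"
        and hi: "\<And>i. N i \<omega> < 2 * exp 1 * \<mu>"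
        using \<omega> unfolding Bad_def Lo_def Hi_def by (auto simp: not_le)
      have Sg_eq: "Sg \<omega> = (\<chi> i j. if i = j then N i \<omega> else 0)"
        unfolding Sg_def N_def using good unfolding I_def S0_def
        by (intro sum_outer_sq_diag) auto
      have mu_eq: "\<mu> = \<theta> * real T / real CARD('n)"
        unfolding \<mu>_def cardI p_def n_def by simp
      have "lowner_le L (Sg \<omega>)"
        unfolding L_def scaled_id_diag Sg_eq
        by (rule diag_lowner) (use lo in \<open>auto simp: mu_eq less_imp_le mult.commute\<close>)
      moreover have "lowner_le (Sg \<omega>) U"
        unfolding U_def scaled_id_diag Sg_eq
        by (rule diag_lowner) (use hi in \<open>auto simp: mu_eq less_imp_le mult.assoc\<close>)
      ultimately show False using \<omega> unfolding E_def by auto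
    qed
  qed
  have "P.prob (space M - E) \<le> P.prob ((\<Union>t\<in>I. Bad t) \<union> ((\<Union>i. Lo i) \<union> (\<Union>i. Hi i)))"
    using sub Bad_sets Lo_sets Hi_sets finI
    by (intro P.finite_measure_mono) auto
  also have "\<dots> \<le> P.prob (\<Union>t\<in>I. Bad t) + P.prob ((\<Union>i. Lo i) \<union> (\<Union>i. Hi i))"
    using Bad_sets Lo_sets Hi_sets finI by (intro measure_Un_le) auto
  also have "\<dots> \<le> P.prob (\<Union>t\<in>I. Bad t) + (P.prob (\<Union>i. Lo i) + P.prob (\<Union>i. Hi i))"
    using Lo_sets Hi_sets by (intro add_left_mono measure_Un_le) auto
  also have "P.prob (\<Union>t\<in>I. Bad t) \<le> (\<Sum>t\<in>I. P.prob (Bad t))"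
    using Bad_sets finI by (intro P.finite_measure_subadditive_finite) auto
  also have "(\<Sum>t\<in>I. P.prob (Bad t)) = 0" using Bad_0 by simp
  also have "P.prob (\<Union>i. Lo i) \<le> (\<Sum>i\<in>UNIV. P.prob (Lo i))"
    using Lo_sets by (intro P.finite_measure_subadditive_finite) auto
  also have "\<dots> \<le> (\<Sum>i\<in>(UNIV::'n set). \<delta> / n)" by (intro sum_mono Lo_le)
  also have "P.prob (\<Union>i. Hi i) \<le> (\<Sum>i\<in>UNIV. P.prob (Hi i))"
    using Hi_sets by (intro P.finite_measure_subadditive_finite) auto
  also have "\<dots> \<le> (\<Sum>i\<in>(UNIV::'n set). \<delta> / n)" by (intro sum_mono Hi_le)
  also have "(\<Sum>i\<in>(UNIV::'n set). \<delta> / n) = \<delta>" using n_pos unfolding n_def by simp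
  finally have "P.prob (space M - E) \<le> 2 * \<delta>" by simp
  moreover have "P.prob (space M - E) = 1 - P.prob E" using E_sets by (rule P.prob_compl)
  ultimately show ?thesis unfolding E_def L_def U_def Sg_def by simp
qed

end
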